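(* For every tree $T\subseteq\mathbb{N}^{<\mathbb{N}}$, $[\mathcal{JT}(T)]=\{\mathcal{J}(Z):Z\in[T]\}$.
   Context: A tree is a subset of $\mathbb{N}^{<\mathbb{N}}$ closed under initial segments; $[T]$ is the set of infinite paths through $T$. Strings are coded by natural numbers via a fixed computable coding with $\sigma\subsetneq\tau$ implying code$(\sigma)<$ code$(\tau)$. For $\sigma$ finite or infinite, $\{e\}^\sigma_t(n)\downarrow$ means the $e$-th machine on input $n$ with oracle $\sigma$ halts in fewer than $\min(|\sigma|,t)$ steps. For $Z\in\mathbb{N}^\mathbb{N}$: $t_{-1}=1$, $t_n=\max\{t_{n-1}+1,\mu t(\{n\}^Z_t(n)\downarrow)\}$ ($t_n=t_{n-1}+1$ if no such $t$), and $\mathcal{J}(Z)(n)=Z\restriction t_n$. For finite $\sigma$: $t_{-1}=1$, $t_n=\max\{t_{n-1}+1,\mu t(\{n\}^{\sigma\restriction t}(n)\downarrow)\}$ (halting within $|\sigma\restriction t|$ steps; $t_n=t_{n-1}+1$ if no such $t$), and $J(\sigma)=\langle\sigma\restriction t_0,\dots,\sigma\restriction t_{k-1}\rangle$ with $k$ least such that $t_k>|\sigma|$. $\mathcal{JT}(T)=\{J(\sigma):\sigma\in T\}$. *)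

theory Defs
  imports Main "HOL-Library.Nat_Bijection"
begin

definition restr :: "(nat \<Rightarrow> nat) \<Rightarrow> nat \<Rightarrow> nat list" where
  "restr Z n = map Z [0..<n]"

definition is_tree :: "nat list set \<Rightarrow> bool" where
  "is_tree T \<longleftrightarrow> (\<forall>\<sigma>\<in>T. \<forall>n. take n \<sigma> \<in> T)"

definition paths :: "nat list set \<Rightarrow> (nat \<Rightarrow> nat) set" where
  "paths T = {Z. \<forall>n. restr Z n \<in> T}"

(* fixed computable coding of strings by numbers; list_encode satisfies
   sigma proper prefix of tau ==> code sigma < code tau *)
definition code :: "nat list \<Rightarrow> nat" where
  "code = list_encode"

(* Abstract machine model: Phi e X n s  means: the e-th oracle machine on input n
   with oracle X halts in fewer than s steps. *)

(* a finite oracle viewed as an element of N^N (padding irrelevant by the use principle) *)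
definition ext :: "nat list \<Rightarrow> nat \<Rightarrow> nat" where
  "ext \<sigma> i = (if i < length \<sigma> then \<sigma> ! i else 0)"

(* {e}^Z_t(n) halts, Z infinite: fewer than min(infinity,t) = t steps *)
definition halts_inf :: "(nat \<Rightarrow> (nat \<Rightarrow> nat) \<Rightarrow> nat \<Rightarrow> nat \<Rightarrow> bool)
    \<Rightarrow> nat \<Rightarrow> (nat \<Rightarrow> nat) \<Rightarrow> nat \<Rightarrow> nat \<Rightarrow> bool" where
  "halts_inf \<Phi> e Z t n = \<Phi> e Z n t"

definition halts_fin :: "(nat \<Rightarrow> (nat \<Rightarrow> nat) \<Rightarrow> nat \<Rightarrow> nat \<Rightarrow> bool)
    \<Rightarrow> nat \<Rightarrow> nat list \<Rightarrow> nat \<Rightarrow> nat \<Rightarrow> bool" where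
  "halts_fin \<Phi> e \<sigma> t n = \<Phi> e (ext \<sigma>) n (min (length \<sigma>) t)"

(* generic t-sequence: tseq c 0 = t_{-1} = 1, tseq c (Suc n) = t_n *)
primrec tseq :: "(nat \<Rightarrow> nat \<Rightarrow> bool) \<Rightarrow> nat \<Rightarrow> nat" where
  "tseq c 0 = 1"
| "tseq c (Suc n) = (if \<exists>t. c n t then max (tseq c n + 1) (LEAST t. c n t)
                     else tseq c n + 1)"

definition tZ :: "(nat \<Rightarrow> (nat \<Rightarrow> nat) \<Rightarrow> nat \<Rightarrow> nat \<Rightarrow> bool) \<Rightarrow> (nat \<Rightarrow> nat) \<Rightarrow> nat \<Rightarrow> nat" where
  "tZ \<Phi> Z = tseq (\<lambda>n t. halts_inf \<Phi> n Z t n)"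

definition tF :: "(nat \<Rightarrow> (nat \<Rightarrow> nat) \<Rightarrow> nat \<Rightarrow> nat \<Rightarrow> bool) \<Rightarrow> nat list \<Rightarrow> nat \<Rightarrow> nat" where
  "tF \<Phi> \<sigma> = tseq (\<lambda>n t. halts_fin \<Phi> n (take t \<sigma>) t n)"

definition JJ :: "(nat \<Rightarrow> (nat \<Rightarrow> nat) \<Rightarrow> nat \<Rightarrow> nat \<Rightarrow> bool) \<Rightarrow> (nat \<Rightarrow> nat) \<Rightarrow> nat \<Rightarrow> nat" where
  "JJ \<Phi> Z n = code (restr Z (tZ \<Phi> Z (Suc n)))"

definition Jfin :: "(nat \<Rightarrow> (nat \<Rightarrow> nat) \<Rightarrow> nat \<Rightarrow> nat \<Rightarrow> bool) \<Rightarrow> nat list \<Rightarrow> nat list" where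
  "Jfin \<Phi> \<sigma> = (let k = (LEAST k. tF \<Phi> \<sigma> (Suc k) > length \<sigma>)
                 in map (\<lambda>i. code (take (tF \<Phi> \<sigma> (Suc i)) \<sigma>)) [0..<k])"

definition JT :: "(nat \<Rightarrow> (nat \<Rightarrow> nat) \<Rightarrow> nat \<Rightarrow> nat \<Rightarrow> bool) \<Rightarrow> nat list set \<Rightarrow> nat list set" where
  "JT \<Phi> T = Jfin \<Phi> ` T"

end

theory Submission
  imports Defs
begin

lemma tseq_step: "tseq c n < tseq c (Suc n)"
  by auto

lemma tseq_strict: "i < j \<Longrightarrow> tseq c i < tseq c j"
  by (rule lift_Suc_mono_less[of "tseq c"]) (auto simp: tseq_step)

lemma tseq_mono: "i \<le> j \<Longrightarrow> tseq c i \<le> tseq c j"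
  by (metis le_less tseq_strict)

lemma tseq_ge: "n < tseq c n"
proof (induction n)
  case 0 then show ?case by simp
next
  case (Suc n) then show ?case using tseq_step[of c n] by linarith
qed

lemma tseq_least_le: "c n t \<Longrightarrow> (LEAST t. c n t) \<le> tseq c (Suc n)"
  by auto

lemma Least_agree:
  fixes P Q :: "nat \<Rightarrow> bool"
  assumes "t \<le> L" "Q t" "\<forall>t\<le>L. P t = Q t"
  shows "(LEAST t. P t) = (LEAST t. Q t)"
proof -
  have Pt: "P t" using assms by auto
  define a where "a = (LEAST t. P t)"
  define b where "b = (LEAST t. Q t)"
  have a1: "P a" "a \<le> t" using Pt unfolding a_def by (auto intro: LeastI Least_le)
  have b1: "Q b" "b \<le> t" using assms(2) unfolding b_def by (auto intro: LeastI Least_le)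
  have "Q a" using a1 assms by auto
  then have "b \<le> a" unfolding b_def by (rule Least_le)
  moreover have "P b" using b1 assms by auto
  then have "a \<le> b" unfolding a_def by (rule Least_le)
  ultimately show ?thesis unfolding a_def b_def by simp
qed

lemma A1:
  assumes "tseq c j = tseq d j" "tseq c (Suc j) \<le> L" "\<forall>t\<le>L. c j t = d j t"
    "(\<forall>t. \<not> d j t) \<or> (\<exists>t\<le>L. d j t)"
  shows "tseq c (Suc j) = tseq d (Suc j)"
proof (cases "\<exists>t\<le>L. d j t")
  case True
  then obtain t where t: "t \<le> L" "d j t" by auto
  have ct: "c j t" using assms(3) t by auto
  have "(LEAST t. c j t) = (LEAST t. d j t)"
    using Least_agree[of t L "d j" "c j"] t assms(3) by auto
  then show ?thesis using assms(1) t ct by auto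
next
  case False
  then have nd: "\<forall>t. \<not> d j t" using assms(4) by auto
  have nc: "\<forall>t. \<not> c j t"
  proof (rule ccontr)
    assume "\<not> (\<forall>t. \<not> c j t)"
    then obtain t where "c j t" by auto
    then have "c j (LEAST t. c j t)" "(LEAST t. c j t) \<le> tseq c (Suc j)"
      by (auto intro: LeastI)
    then show False using assms(2,3) nd by (meson order_trans)
  qed
  show ?thesis using nc nd assms(1) by simp
qed

lemma A2:
  assumes "tseq c j = tseq d j" "tseq d (Suc j) \<le> L" "\<forall>t\<le>L. c j t = d j t"
    "\<forall>t. c j t \<longrightarrow> (\<exists>t'\<le>L. c j t')"
  shows "tseq c (Suc j) = tseq d (Suc j)"
proof (cases "\<exists>t. d j t")
  case True
  then obtain t where "d j t" by auto
  then have b: "d j (LEAST t. d j t)" "(LEAST t. d j t) \<le> tseq d (Suc j)"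
    by (auto intro: LeastI)
  define b where "b = (LEAST t. d j t)"
  have bL: "b \<le> L" using b assms(2) unfolding b_def by linarith
  have cb: "c j b" using b bL assms(3) unfolding b_def by auto
  have "(LEAST t. c j t) = (LEAST t. d j t)"
    using Least_agree[of b L "d j" "c j"] b bL assms(3) unfolding b_def by auto
  then show ?thesis using assms(1) True cb by auto
next
  case False
  have nc: "\<forall>t. \<not> c j t" using False assms(3,4) by blast
  show ?thesis using nc False assms(1) by simp
qed

lemma agreeB:
  assumes use_principle: "\<And>e X Y n s. (\<forall>i<s. X i = Y i) \<Longrightarrow> \<Phi> e X n s = \<Phi> e Y n s"
    and "take L \<sigma> = restr Z L" "L \<le> length \<sigma>" "t \<le> L"
  shows "halts_fin \<Phi> j (take t \<sigma>) t j = halts_inf \<Phi> j Z t j"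
proof -
  have len: "length (take t \<sigma>) = t" using assms by simp
  have "\<forall>i<t. ext (take t \<sigma>) i = Z i"
  proof (intro allI impI)
    fix i assume i: "i < t"
    have "ext (take t \<sigma>) i = \<sigma> ! i" using i len by (simp add: ext_def)
    moreover have "take L \<sigma> ! i = \<sigma> ! i" using i assms(3,4) by simp
    moreover have "restr Z L ! i = Z i" using i assms by (simp add: restr_def)
    ultimately show "ext (take t \<sigma>) i = Z i" using assms(2) by simp
  qed
  then show ?thesis unfolding halts_fin_def halts_inf_def len
    using use_principle by simp
qed

definition kk :: "(nat \<Rightarrow> (nat \<Rightarrow> nat) \<Rightarrow> nat \<Rightarrow> nat \<Rightarrow> bool) \<Rightarrow> nat list \<Rightarrow> nat" where
  "kk \<Phi> \<sigma> = (LEAST k. tF \<Phi> \<sigma> (Suc k) > length \<sigma>)"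

lemma kk_ex: "tF \<Phi> \<sigma> (Suc (kk \<Phi> \<sigma>)) > length \<sigma>"
  unfolding kk_def tF_def by (rule LeastI[of _ "length \<sigma>"]) (meson Suc_lessD tseq_ge)

lemma kk_below: "i < kk \<Phi> \<sigma> \<Longrightarrow> tF \<Phi> \<sigma> (Suc i) \<le> length \<sigma>"
  unfolding kk_def using not_less_Least by (metis not_le)

lemma Jfin_len: "length (Jfin \<Phi> \<sigma>) = kk \<Phi> \<sigma>"
  unfolding Jfin_def kk_def Let_def by simp

lemma Jfin_nth: "i < kk \<Phi> \<sigma> \<Longrightarrow> Jfin \<Phi> \<sigma> ! i = code (take (tF \<Phi> \<sigma> (Suc i)) \<sigma>)"
  unfolding Jfin_def kk_def[symmetric] Let_def by simp

lemma kk_eqI: "tF \<Phi> \<sigma> (Suc n) > length \<sigma> \<Longrightarrow> (\<forall>i<n. tF \<Phi> \<sigma> (Suc i) \<le> length \<sigma>) \<Longrightarrow> kk \<Phi> \<sigma> = n"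
  unfolding kk_def by (rule Least_equality) (auto simp: not_less[symmetric])

lemma sup_dir:
  assumes use_principle: "\<And>e X Y n s. (\<forall>i<s. X i = Y i) \<Longrightarrow> \<Phi> e X n s = \<Phi> e Y n s"
  shows "restr (JJ \<Phi> Z) n = Jfin \<Phi> (restr Z (tZ \<Phi> Z n))"
proof -
  define m where "m = tZ \<Phi> Z n"
  define \<sigma> where "\<sigma> = restr Z m"
  have lenS: "length \<sigma> = m" unfolding \<sigma>_def restr_def by simp
  have tk: "take m \<sigma> = restr Z m" using lenS \<sigma>_def by simp
  have eq: "j \<le> n \<Longrightarrow> tF \<Phi> \<sigma> j = tZ \<Phi> Z j" for j
  proof (induction j)
    case 0 then show ?case by (simp add: tF_def tZ_def)
  next
    case (Suc j)
    have IH: "tF \<Phi> \<sigma> j = tZ \<Phi> Z j" using Suc by simp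
    have bnd: "tZ \<Phi> Z (Suc j) \<le> m" unfolding m_def tZ_def using Suc.prems by (rule tseq_mono)
    have agree: "\<forall>t\<le>m. halts_fin \<Phi> j (take t \<sigma>) t j = halts_inf \<Phi> j Z t j"
      using agreeB[OF use_principle tk] lenS by simp
    have H: "\<forall>t. halts_fin \<Phi> j (take t \<sigma>) t j \<longrightarrow> (\<exists>t'\<le>m. halts_fin \<Phi> j (take t' \<sigma>) t' j)"
    proof (intro allI impI)
      fix t assume ht: "halts_fin \<Phi> j (take t \<sigma>) t j"
      show "\<exists>t'\<le>m. halts_fin \<Phi> j (take t' \<sigma>) t' j"
      proof (cases "t \<le> m")
        case True then show ?thesis using ht by auto
      next
        case False
        then have "halts_fin \<Phi> j (take m \<sigma>) m j" using ht lenS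
          by (simp add: halts_fin_def)
        then show ?thesis by auto
      qed
    qed
    show ?case using IH bnd agree H unfolding tF_def tZ_def by (rule A2)
  qed
  have kn: "kk \<Phi> \<sigma> = n"
  proof (rule kk_eqI)
    have "tF \<Phi> \<sigma> n < tF \<Phi> \<sigma> (Suc n)" unfolding tF_def by (rule tseq_step)
    then show "length \<sigma> < tF \<Phi> \<sigma> (Suc n)" using eq[of n] lenS m_def by simp
    show "\<forall>i<n. tF \<Phi> \<sigma> (Suc i) \<le> length \<sigma>"
      using eq lenS m_def tseq_mono unfolding tZ_def
      by (metis Suc_leI)
  qed
  show ?thesis
  proof (rule nth_equalityI)
    show "length (restr (JJ \<Phi> Z) n) = length (Jfin \<Phi> (restr Z (tZ \<Phi> Z n)))"
      using Jfin_len kn by (simp add: restr_def \<sigma>_def m_def)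
  next
    fix i assume "i < length (restr (JJ \<Phi> Z) n)"
    then have i: "i < n" by (simp add: restr_def)
    have e: "tF \<Phi> \<sigma> (Suc i) = tZ \<Phi> Z (Suc i)" using eq i by simp
    have b: "tZ \<Phi> Z (Suc i) \<le> m" unfolding m_def tZ_def using i by (intro tseq_mono) simp
    have "Jfin \<Phi> \<sigma> ! i = code (take (tZ \<Phi> Z (Suc i)) \<sigma>)"
      using Jfin_nth[of i \<Phi> \<sigma>] kn i e by simp
    also have "take (tZ \<Phi> Z (Suc i)) \<sigma> = restr Z (tZ \<Phi> Z (Suc i))"
      using b unfolding \<sigma>_def restr_def by (simp add: take_map min_def)
    finally show "restr (JJ \<Phi> Z) n ! i = Jfin \<Phi> (restr Z (tZ \<Phi> Z n)) ! i"
      using i by (simp add: restr_def JJ_def \<sigma>_def m_def)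
  qed
qed

lemma take_restr: "n \<le> m \<Longrightarrow> take n (restr Z m) = restr Z n"
  unfolding restr_def by (simp add: take_map min_def)

lemma sub_dir:
  assumes use_principle: "\<And>e X Y n s. (\<forall>i<s. X i = Y i) \<Longrightarrow> \<Phi> e X n s = \<Phi> e Y n s"
    and tree: "is_tree T" and Y: "Y \<in> paths (JT \<Phi> T)"
  shows "\<exists>Z\<in>paths T. JJ \<Phi> Z = Y"
proof -
  have ex: "\<exists>\<sigma>. \<sigma> \<in> T \<and> Jfin \<Phi> \<sigma> = restr Y M" for M
  proof -
    have "restr Y M \<in> Jfin \<Phi> ` T" using Y by (simp add: paths_def JT_def)
    then obtain \<sigma> where "\<sigma> \<in> T" "restr Y M = Jfin \<Phi> \<sigma>" by auto
    then show ?thesis by auto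
  qed
  define S where "S M = (SOME \<sigma>. \<sigma> \<in> T \<and> Jfin \<Phi> \<sigma> = restr Y M)" for M
  have S: "S M \<in> T" "Jfin \<Phi> (S M) = restr Y M" for M
    using someI_ex[OF ex[of M]] unfolding S_def by auto
  have kS: "kk \<Phi> (S M) = M" for M using Jfin_len[of \<Phi> "S M"] S(2)[of M] by (simp add: restr_def)
  define \<tau> where "\<tau> i = list_decode (Y i)" for i
  define len where "len i = length (\<tau> i)" for i
  have tau: "\<tau> i = take (tF \<Phi> (S M) (Suc i)) (S M)" "tF \<Phi> (S M) (Suc i) \<le> length (S M)"
    if "i < M" for i M
  proof -
    have "Jfin \<Phi> (S M) ! i = code (take (tF \<Phi> (S M) (Suc i)) (S M))"
      using Jfin_nth[of i \<Phi> "S M"] kS that by simp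
    moreover have "Jfin \<Phi> (S M) ! i = Y i" using S(2)[of M] that by (simp add: restr_def)
    ultimately show "\<tau> i = take (tF \<Phi> (S M) (Suc i)) (S M)"
      unfolding \<tau>_def code_def by (metis list_encode_inverse)
    show "tF \<Phi> (S M) (Suc i) \<le> length (S M)" using kk_below[of i \<Phi> "S M"] kS[of M] that by simp
  qed
  have lenM: "tF \<Phi> (S M) (Suc i) = len i" if "i < M" for i M
    using tau[OF that] unfolding len_def by simp
  have len_strict: "len i < len (Suc i)" for i
  proof -
    have "tF \<Phi> (S (Suc (Suc i))) (Suc i) < tF \<Phi> (S (Suc (Suc i))) (Suc (Suc i))"
      unfolding tF_def by (rule tseq_step)
    then show ?thesis using lenM[of i "Suc (Suc i)"] lenM[of "Suc i" "Suc (Suc i)"] by simp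
  qed
  have len_mono: "i \<le> i' \<Longrightarrow> len i \<le> len i'" for i i'
    by (rule lift_Suc_mono_le[of len]) (use len_strict less_imp_le in auto)
  have len_ge: "Suc i < len i" for i
  proof -
    have "Suc i < tF \<Phi> (S (Suc i)) (Suc i)" unfolding tF_def by (rule tseq_ge)
    then show ?thesis using lenM[of i "Suc i"] by simp
  qed
  have pre: "\<tau> i = take (len i) (\<tau> i')" if "i \<le> i'" for i i'
  proof -
    have "\<tau> i = take (len i) (S (Suc i'))" using tau(1)[of i "Suc i'"] lenM[of i "Suc i'"] that by simp
    moreover have "\<tau> i' = take (len i') (S (Suc i'))" using tau(1)[of i' "Suc i'"] lenM[of i' "Suc i'"] by simp
    ultimately show ?thesis using len_mono[OF that] by (simp add: min_def)
  qed
  define Z where "Z p = \<tau> p ! p" for p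
  have rZ: "restr Z (len i) = \<tau> i" for i
  proof (rule nth_equalityI)
    show "length (restr Z (len i)) = length (\<tau> i)" by (simp add: restr_def len_def)
  next
    fix p assume "p < length (restr Z (len i))"
    then have p: "p < len i" by (simp add: restr_def)
    have "Z p = \<tau> i ! p"
    proof (cases "p \<le> i")
      case True
      have "p < len p" using len_ge[of p] by simp
      then show ?thesis using pre[OF True] unfolding Z_def by simp
    next
      case False
      then show ?thesis using pre[of i p] p unfolding Z_def by simp
    qed
    then show "restr Z (len i) ! p = \<tau> i ! p" using p by (simp add: restr_def)
  qed
  have ZT: "Z \<in> paths T"
    unfolding paths_def
  proof (intro CollectI allI)
    fix n
    have "n \<le> len n" using len_ge[of n] by simp
    then have "restr Z n = take n (\<tau> n)" using take_restr[of n "len n" Z] rZ[of n] by simp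
    also have "\<tau> n = take (len n) (S (Suc n))" using tau(1)[of n "Suc n"] lenM[of n "Suc n"] by simp
    finally have "restr Z n = take n (take (len n) (S (Suc n)))" .
    moreover have "take (len n) (S (Suc n)) \<in> T" using tree S(1)[of "Suc n"] unfolding is_tree_def by blast
    then have "take n (take (len n) (S (Suc n))) \<in> T" using tree unfolding is_tree_def by blast
    ultimately show "restr Z n \<in> T" by simp
  qed
  have key: "tZ \<Phi> Z j = (case j of 0 \<Rightarrow> 1 | Suc i \<Rightarrow> len i)" for j
  proof (induction j)
    case 0 then show ?case by (simp add: tZ_def)
  next
    case (Suc j)
    define cZ where "cZ = (\<lambda>n t. halts_inf \<Phi> n Z t n)"
    define w where "w = (if \<exists>t. cZ j t then (SOME t. cZ j t) else 0)"
    define M where "M = Suc (max j w)"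
    define \<sigma> where "\<sigma> = S M"
    define L where "L = len (max j w)"
    have j1: "tF \<Phi> \<sigma> j = tZ \<Phi> Z j"
    proof (cases j)
      case 0 then show ?thesis by (simp add: tF_def tZ_def)
    next
      case (Suc i)
      then have "tF \<Phi> \<sigma> j = len i" using lenM[of i M] unfolding \<sigma>_def M_def by simp
      then show ?thesis using Suc.IH Suc by simp
    qed
    have lj: "tF \<Phi> \<sigma> (Suc j) = len j" using lenM[of j M] unfolding \<sigma>_def M_def by simp
    have bnd: "tF \<Phi> \<sigma> (Suc j) \<le> L" using lj len_mono unfolding L_def by simp
    have tk: "take L \<sigma> = restr Z L"
      using tau(1)[of "max j w" M] lenM[of "max j w" M] rZ[of "max j w"]
      unfolding \<sigma>_def M_def L_def by simp
    have Lle: "L \<le> length \<sigma>"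
      using tau(2)[of "max j w" M] lenM[of "max j w" M] unfolding \<sigma>_def M_def L_def by simp
    have agree: "\<forall>t\<le>L. halts_fin \<Phi> j (take t \<sigma>) t j = halts_inf \<Phi> j Z t j"
      using agreeB[OF use_principle tk Lle] by simp
    have wit: "(\<forall>t. \<not> cZ j t) \<or> (\<exists>t\<le>L. cZ j t)"
    proof (cases "\<exists>t. cZ j t")
      case True
      then have "cZ j w" unfolding w_def by (simp add: someI_ex)
      moreover have "w \<le> L" using len_ge[of "max j w"] unfolding L_def by simp
      ultimately show ?thesis by auto
    qed auto
    have "tF \<Phi> \<sigma> (Suc j) = tZ \<Phi> Z (Suc j)"
      using j1 bnd agree wit unfolding tF_def tZ_def cZ_def by (rule A1)
    then show ?case using lj by simp
  qed
  have "JJ \<Phi> Z = Y"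
  proof
    fix n
    have "tZ \<Phi> Z (Suc n) = len n" using key[of "Suc n"] by simp
    then show "JJ \<Phi> Z n = Y n" unfolding JJ_def using rZ[of n]
      by (simp add: code_def \<tau>_def)
  qed
  then show ?thesis using ZT by auto
qed

theorem lemma4p9:
  fixes \<Phi> :: "nat \<Rightarrow> (nat \<Rightarrow> nat) \<Rightarrow> nat \<Rightarrow> nat \<Rightarrow> bool"
    and T :: "nat list set"
  assumes use_principle: "\<And>e X Y n s. (\<forall>i<s. X i = Y i) \<Longrightarrow> \<Phi> e X n s = \<Phi> e Y n s"
    and tree: "is_tree T"
  shows "paths (JT \<Phi> T) = JJ \<Phi> ` paths T"
proof
  show "paths (JT \<Phi> T) \<subseteq> JJ \<Phi> ` paths T"
    proof
    fix Y assume "Y \<in> paths (JT \<Phi> T)"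
    then obtain Z where "Z \<in> paths T" "JJ \<Phi> Z = Y" using sub_dir[where \<Phi>=\<Phi>, OF use_principle tree] by blast
    then show "Y \<in> JJ \<Phi> ` paths T" by blast
  qed
next
  show "JJ \<Phi> ` paths T \<subseteq> paths (JT \<Phi> T)"
  proof
    fix Y assume "Y \<in> JJ \<Phi> ` paths T"
    then obtain Z where Z: "Z \<in> paths T" "Y = JJ \<Phi> Z" by auto
    show "Y \<in> paths (JT \<Phi> T)" unfolding paths_def JT_def
    proof (intro CollectI allI)
      fix n
      have "restr Z (tZ \<Phi> Z n) \<in> T" using Z(1) unfolding paths_def by simp
      then show "restr Y n \<in> Jfin \<Phi> ` T" using sup_dir[where \<Phi>=\<Phi>, OF use_principle, of Z n] Z(2) by auto
    qed
  qed
qed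

end
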